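(* If $\Delta$ and $\Theta$ are deterministic, then $p\cdot\Delta + (1-p)\cdot\Theta$ is deterministic for every probability $p$.
   Context: Distributions are over lqCCS extended configurations $\langle\!\langle \rho, P, R \rangle\!\rangle$ (density operator, process, observer) and a deadlock configuration $\bot$. Contexts $O[\cdot] = [\cdot] \parallel R'$ add an observer $R'$ (a process without $\tau$ and restriction whose sums are only sums of inputs on distinct channels). $\rightsquigarrow_\pi$ is the enhanced semantics with index $\pi = \diamond$ (only the process moves) or $\pi \in \{\ell,r\}^*$ (naming the observer component that acts), lifted to distributions by linearity so that all configurations in the support move with the same index; it is decomposable with respect to convex combinations. Constrained saturated bisimilarity $\sim_{cs}$ is the largest relation that, for every context, preserves barbs and matches indexed moves with related results, and it is linear (closed under convex combinations). A set $\mathcal{A}$ of distributions is deterministic if for every $\Delta \in \mathcal{A}$, every context $O[\cdot]$ and index $\pi$, whenever $O[\Delta] \rightsquigarrow_\pi \Delta'$ and $O[\Delta] \rightsquigarrow_\pi \Delta''$ then $\Delta' \sim_{cs} \Delta''$ and $\Delta', \Delta'' \in \mathcal{A}$; a distribution is deterministic if it belongs to some deterministic set. *)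

theory Defs
  imports "HOL-Probability.Probability"
begin

text \<open>Abstract rendering of the lqCCS setting.
  'c : extended configurations (density operator, process, observer) together with the
       deadlock configuration; distributions are 'c pmf.
  'o : observers R' (the admissible contexts O[.] = [.] || R').
  plug Rc c : the configuration O[c]; O[Delta] is obtained by pushing Delta through plug Rc.
  cstep c ix Theta : configuration c moves with index ix to the distribution Theta
       (enhanced semantics).
  barb Delta b : distribution Delta exhibits barb b.\<close>

datatype side = SL | SR
datatype idx = Proc | Obs "side list"

definition cmix :: "real \<Rightarrow> 'c pmf \<Rightarrow> 'c pmf \<Rightarrow> 'c pmf" where
  "cmix p D T = bind_pmf (bernoulli_pmf p) (\<lambda>b. if b then D else T)"

definition ctx :: "('o \<Rightarrow> 'c \<Rightarrow> 'c) \<Rightarrow> 'o \<Rightarrow> 'c pmf \<Rightarrow> 'c pmf" where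
  "ctx plug Rc D = map_pmf (plug Rc) D"

text \<open>Lifting of the configuration semantics to distributions by linearity: every
  configuration in the support moves with the same index.\<close>
definition dstep :: "('c \<Rightarrow> idx \<Rightarrow> 'c pmf \<Rightarrow> bool) \<Rightarrow> 'c pmf \<Rightarrow> idx \<Rightarrow> 'c pmf \<Rightarrow> bool" where
  "dstep cstep D ix D' \<longleftrightarrow>
     (\<exists>J :: ('c \<times> 'c pmf) pmf. map_pmf fst J = D \<and>
        (\<forall>x \<in> set_pmf J. cstep (fst x) ix (snd x)) \<and> D' = bind_pmf J snd)"

definition cs_bisim ::
  "('o \<Rightarrow> 'c \<Rightarrow> 'c) \<Rightarrow> ('c \<Rightarrow> idx \<Rightarrow> 'c pmf \<Rightarrow> bool) \<Rightarrow> ('c pmf \<Rightarrow> 'b \<Rightarrow> bool)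
    \<Rightarrow> ('c pmf \<Rightarrow> 'c pmf \<Rightarrow> bool) \<Rightarrow> bool" where
  "cs_bisim plug cstep barb R \<longleftrightarrow>
     (\<forall>D T. R D T \<longrightarrow> R T D) \<and>
     (\<forall>D T. R D T \<longrightarrow> (\<forall>Rc.
        (\<forall>b. barb (ctx plug Rc D) b \<longleftrightarrow> barb (ctx plug Rc T) b) \<and>
        (\<forall>ix D'. dstep cstep (ctx plug Rc D) ix D' \<longrightarrow>
           (\<exists>T'. dstep cstep (ctx plug Rc T) ix T' \<and> R D' T'))))"

definition cs_bisimilar ::
  "('o \<Rightarrow> 'c \<Rightarrow> 'c) \<Rightarrow> ('c \<Rightarrow> idx \<Rightarrow> 'c pmf \<Rightarrow> bool) \<Rightarrow> ('c pmf \<Rightarrow> 'b \<Rightarrow> bool)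
    \<Rightarrow> 'c pmf \<Rightarrow> 'c pmf \<Rightarrow> bool" where
  "cs_bisimilar plug cstep barb D T \<longleftrightarrow> (\<exists>R. cs_bisim plug cstep barb R \<and> R D T)"

text \<open>Standing fact of the paper: constrained saturated bisimilarity is linear.\<close>
definition cs_linear ::
  "('o \<Rightarrow> 'c \<Rightarrow> 'c) \<Rightarrow> ('c \<Rightarrow> idx \<Rightarrow> 'c pmf \<Rightarrow> bool) \<Rightarrow> ('c pmf \<Rightarrow> 'b \<Rightarrow> bool) \<Rightarrow> bool" where
  "cs_linear plug cstep barb \<longleftrightarrow>
     (\<forall>p D1 D2 T1 T2. 0 \<le> p \<and> p \<le> 1 \<and> cs_bisimilar plug cstep barb D1 T1 \<and>
        cs_bisimilar plug cstep barb D2 T2 \<longrightarrow>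
        cs_bisimilar plug cstep barb (cmix p D1 D2) (cmix p T1 T2))"

definition det_set ::
  "('o \<Rightarrow> 'c \<Rightarrow> 'c) \<Rightarrow> ('c \<Rightarrow> idx \<Rightarrow> 'c pmf \<Rightarrow> bool) \<Rightarrow> ('c pmf \<Rightarrow> 'b \<Rightarrow> bool)
    \<Rightarrow> 'c pmf set \<Rightarrow> bool" where
  "det_set plug cstep barb A \<longleftrightarrow>
     (\<forall>D \<in> A. \<forall>Rc ix D' D''. dstep cstep (ctx plug Rc D) ix D' \<and> dstep cstep (ctx plug Rc D) ix D''
        \<longrightarrow> cs_bisimilar plug cstep barb D' D'' \<and> D' \<in> A \<and> D'' \<in> A)"

definition deterministic ::
  "('o \<Rightarrow> 'c \<Rightarrow> 'c) \<Rightarrow> ('c \<Rightarrow> idx \<Rightarrow> 'c pmf \<Rightarrow> bool) \<Rightarrow> ('c pmf \<Rightarrow> 'b \<Rightarrow> bool)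
    \<Rightarrow> 'c pmf \<Rightarrow> bool" where
  "deterministic plug cstep barb D \<longleftrightarrow> (\<exists>A. det_set plug cstep barb A \<and> D \<in> A)"

end

theory Submission
  imports Defs
begin

lemma pmf_cmix:
  assumes "0 \<le> q" "q \<le> 1"
  shows "pmf (cmix q A B) z = q * pmf A z + (1 - q) * pmf B z"
  using assms by (simp add: cmix_def pmf_bind)

lemma cmix_0: "cmix 0 A B = B"
  by (rule pmf_eqI) (simp add: pmf_cmix)

lemma cmix_1: "cmix 1 A B = A"
  by (rule pmf_eqI) (simp add: pmf_cmix)

lemma ctx_cmix: "ctx plug Rc (cmix q A B) = cmix q (ctx plug Rc A) (ctx plug Rc B)"
  unfolding ctx_def cmix_def map_bind_pmf
  by (rule arg_cong[where f="bind_pmf _"]) (simp add: fun_eq_iff)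

lemma bind_cmix: "bind_pmf (cmix q A B) f = cmix q (bind_pmf A f) (bind_pmf B f)"
  unfolding cmix_def bind_assoc_pmf
  by (rule arg_cong[where f="bind_pmf _"]) (simp add: fun_eq_iff)

lemma decomp:
  assumes q: "0 < q" "q < 1"
    and st: "dstep cstep (cmix q X Y) ix E"
  shows "\<exists>X' Y'. dstep cstep X ix X' \<and> dstep cstep Y ix Y' \<and> E = cmix q X' Y'"
proof -
  obtain J where J1: "map_pmf fst J = cmix q X Y" and J2: "\<forall>x \<in> set_pmf J. cstep (fst x) ix (snd x)"
    and J3: "E = bind_pmf J snd"
    using st unfolding dstep_def by blast
  define C where "C x = cond_pmf J {z. fst z = x}" for x
  have ne: "set_pmf J \<inter> {z. fst z = x} \<noteq> {}" if "x \<in> set_pmf X \<or> x \<in> set_pmf Y" for x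
  proof -
    have "pmf (cmix q X Y) x > 0"
      using that q by (auto simp: pmf_cmix pmf_positive add_pos_nonneg add_nonneg_pos)
    hence "x \<in> set_pmf (map_pmf fst J)" using J1 by (simp add: set_pmf_iff)
    thus ?thesis by auto
  qed
  have setC: "set_pmf (C x) = set_pmf J \<inter> {z. fst z = x}" if "x \<in> set_pmf X \<or> x \<in> set_pmf Y" for x
    unfolding C_def using ne[OF that] by simp
  have pmfC: "pmf (C x) z = (if fst z = x then pmf J z / pmf (cmix q X Y) x else 0)"
    if "x \<in> set_pmf X \<or> x \<in> set_pmf Y" for x z
  proof -
    have "measure J {z. fst z = x} = pmf (map_pmf fst J) x"
      by (simp add: pmf_map vimage_def)
    thus ?thesis unfolding C_def using ne[OF that] J1 by (simp add: pmf_cond)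
  qed
  define J1' where "J1' = bind_pmf X C"
  define J2' where "J2' = bind_pmf Y C"
  have mapC: "map_pmf fst (C x) = return_pmf x" if "x \<in> set_pmf X \<or> x \<in> set_pmf Y" for x
    using setC[OF that] by (simp add: map_pmf_eq_return_pmf_iff)
  have m1: "map_pmf fst J1' = X"
    unfolding J1'_def map_bind_pmf
    by (subst bind_pmf_cong[OF refl, where g=return_pmf]) (auto simp: mapC bind_return_pmf')
  have m2: "map_pmf fst J2' = Y"
    unfolding J2'_def map_bind_pmf
    by (subst bind_pmf_cong[OF refl, where g=return_pmf]) (auto simp: mapC bind_return_pmf')
  have s1: "set_pmf J1' \<subseteq> set_pmf J" unfolding J1'_def using setC by auto
  have s2: "set_pmf J2' \<subseteq> set_pmf J" unfolding J2'_def using setC by auto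
  have pJ1: "pmf J1' z = pmf X (fst z) * pmf J z / pmf (cmix q X Y) (fst z)" for z
  proof -
    have "pmf J1' z = (\<Sum>a\<in>{fst z}. pmf (C a) z * pmf X a)"
      unfolding J1'_def pmf_bind
      by (rule integral_measure_pmf_real) (auto simp: pmfC split: if_splits)
    also have "\<dots> = pmf X (fst z) * pmf J z / pmf (cmix q X Y) (fst z)"
      by (cases "fst z \<in> set_pmf X") (auto simp: pmfC set_pmf_iff)
    finally show ?thesis .
  qed
  have pJ2: "pmf J2' z = pmf Y (fst z) * pmf J z / pmf (cmix q X Y) (fst z)" for z
  proof -
    have "pmf J2' z = (\<Sum>a\<in>{fst z}. pmf (C a) z * pmf Y a)"
      unfolding J2'_def pmf_bind
      by (rule integral_measure_pmf_real) (auto simp: pmfC split: if_splits)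
    also have "\<dots> = pmf Y (fst z) * pmf J z / pmf (cmix q X Y) (fst z)"
      by (cases "fst z \<in> set_pmf Y") (auto simp: pmfC set_pmf_iff)
    finally show ?thesis .
  qed
  have Jeq: "J = cmix q J1' J2'"
  proof (rule pmf_eqI)
    fix z
    show "pmf J z = pmf (cmix q J1' J2') z"
    proof (cases "pmf (cmix q X Y) (fst z) = 0")
      case True
      hence "fst z \<notin> set_pmf (map_pmf fst J)" using J1 by (simp add: set_pmf_iff)
      hence "pmf J z = 0" by (auto simp: set_pmf_iff)
      thus ?thesis using q True by (simp add: pmf_cmix pJ1 pJ2)
    next
      case False
      have "pmf (cmix q J1' J2') z = (q * pmf X (fst z) + (1 - q) * pmf Y (fst z)) * pmf J z / pmf (cmix q X Y) (fst z)"
        using q by (simp add: pmf_cmix pJ1 pJ2 add_divide_distrib[symmetric] algebra_simps)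
      also have "\<dots> = pmf J z" using q False by (simp add: pmf_cmix)
      finally show ?thesis by simp
    qed
  qed
  have "dstep cstep X ix (bind_pmf J1' snd)"
    unfolding dstep_def using m1 s1 J2 by blast
  moreover have "dstep cstep Y ix (bind_pmf J2' snd)"
    unfolding dstep_def using m2 s2 J2 by blast
  moreover have "E = cmix q (bind_pmf J1' snd) (bind_pmf J2' snd)"
    using J3 Jeq bind_cmix by metis
  ultimately show ?thesis by blast
qed

theorem lemmaC8:
  fixes plug :: "'o \<Rightarrow> 'c \<Rightarrow> 'c"
    and cstep :: "'c \<Rightarrow> idx \<Rightarrow> 'c pmf \<Rightarrow> bool"
    and barb :: "'c pmf \<Rightarrow> 'b \<Rightarrow> bool"
    and D T :: "'c pmf" and p :: real
  assumes "cs_linear plug cstep barb"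
    and "deterministic plug cstep barb D"
    and "deterministic plug cstep barb T"
    and "0 \<le> p" and "p \<le> 1"
  shows "deterministic plug cstep barb (cmix p D T)"
proof -
  obtain A1 where A1: "det_set plug cstep barb A1" "D \<in> A1"
    using assms(2) unfolding deterministic_def by blast
  obtain A2 where A2: "det_set plug cstep barb A2" "T \<in> A2"
    using assms(3) unfolding deterministic_def by blast
  define B where "B = {cmix q X Y | q X Y. 0 \<le> q \<and> q \<le> 1 \<and> X \<in> A1 \<and> Y \<in> A2}"
  have "det_set plug cstep barb B"
    unfolding det_set_def
  proof (intro ballI allI impI)
    fix M Rc ix D' D''
    assume M: "M \<in> B" and st: "dstep cstep (ctx plug Rc M) ix D' \<and> dstep cstep (ctx plug Rc M) ix D''"
    obtain q X Y where qXY: "M = cmix q X Y" "0 \<le> q" "q \<le> 1" "X \<in> A1" "Y \<in> A2"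
      using M unfolding B_def by blast
    show "cs_bisimilar plug cstep barb D' D'' \<and> D' \<in> B \<and> D'' \<in> B"
    proof (cases "q = 0")
      case True
      hence "M = Y" using qXY by (simp add: cmix_0)
      hence r: "cs_bisimilar plug cstep barb D' D'' \<and> D' \<in> A2 \<and> D'' \<in> A2"
        using A2(1) qXY st unfolding det_set_def by blast
      have "Z \<in> A2 \<Longrightarrow> Z \<in> B" for Z
        unfolding B_def using qXY(4) by (intro CollectI exI[of _ 0] exI[of _ X] exI[of _ Z]) (simp add: cmix_0)
      thus ?thesis using r by blast
    next
      case q0: False
      show ?thesis
      proof (cases "q = 1")
        case True
        hence "M = X" using qXY by (simp add: cmix_1)
        hence r: "cs_bisimilar plug cstep barb D' D'' \<and> D' \<in> A1 \<and> D'' \<in> A1"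
          using A1(1) qXY st unfolding det_set_def by blast
        have "Z \<in> A1 \<Longrightarrow> Z \<in> B" for Z
          unfolding B_def using qXY(5) by (intro CollectI exI[of _ 1] exI[of _ Z] exI[of _ Y]) (simp add: cmix_1)
        thus ?thesis using r by blast
      next
        case False
        have q: "0 < q" "q < 1" using q0 False qXY by auto
        have cM: "ctx plug Rc M = cmix q (ctx plug Rc X) (ctx plug Rc Y)"
          using qXY by (simp add: ctx_cmix)
        obtain X1 Y1 where 1: "dstep cstep (ctx plug Rc X) ix X1" "dstep cstep (ctx plug Rc Y) ix Y1"
          "D' = cmix q X1 Y1"
          using decomp[OF q] st cM by metis
        obtain X2 Y2 where 2: "dstep cstep (ctx plug Rc X) ix X2" "dstep cstep (ctx plug Rc Y) ix Y2"
          "D'' = cmix q X2 Y2"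
          using decomp[OF q] st cM by metis
        have x: "cs_bisimilar plug cstep barb X1 X2 \<and> X1 \<in> A1 \<and> X2 \<in> A1"
          using A1(1) qXY(4) 1 2 unfolding det_set_def by blast
        have y: "cs_bisimilar plug cstep barb Y1 Y2 \<and> Y1 \<in> A2 \<and> Y2 \<in> A2"
          using A2(1) qXY(5) 1 2 unfolding det_set_def by blast
        have "cs_bisimilar plug cstep barb D' D''"
          using assms(1) x y q 1(3) 2(3) unfolding cs_linear_def by auto
        moreover have "D' \<in> B" "D'' \<in> B" unfolding B_def using 1(3) 2(3) x y q less_imp_le by blast+
        ultimately show ?thesis by blast
      qed
    qed
  qed
  moreover have "cmix p D T \<in> B" unfolding B_def using assms A1 A2 by blast
  ultimately show ?thesis unfolding deterministic_def by blast
qed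

end
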